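(* Let $\varphi$ be a real-valued Orlicz integrand. Then $C_\varphi(\mu)$ and $C^\sigma_\varphi(\mu)$ are almost decomposable with respect to $\mu$.
   Context: $(\Omega,\mathcal{A},\mu)$ measure space with nontrivial positive measure, $X$ real Banach space. Orlicz integrand: $\varphi\colon\Omega\times X\to[0,\infty]$ with $\varphi(\omega,\cdot)$ even, convex, lsc, proper, $\varphi(\omega,x)\to0$ as $x\to0$, $\varphi(\omega,x)\to\infty$ as $\|x\|\to\infty$ for a.e. $\omega$, and restriction to $A\times W$ being $\mathcal{A}(A)\otimes\mathcal{B}(W)$-measurable for every set $A$ that is a union of countably many atoms and a $\sigma$-finite set and every separable $W\subset X$; real-valued means $\varphi(\omega,x)<\infty$ for all $x$ and a.e. $\omega$. $L_\varphi(\mu)$: a.e.-classes of strongly measurable $u$ with finite Luxemburg norm $\|u\|_\varphi=\inf\{\alpha>0:\int\varphi(\omega,u/\alpha)d\mu\le1\}$. $C_\varphi(\mu)$: $u\in L_\varphi(\mu)$ with $\|u\chi_{E_n}\|_\varphi\to0$ for every sequence $E_n\in\mathcal{A}$ with $\chi_{E_n}\to0$ a.e.; $C^\sigma_\varphi(\mu)$: its elements vanishing outside a $\sigma$-finite set. A space $S$ of measurable functions $\Omega\to X$ is almost decomposable if for every $u_0\in S$, $F\in\mathcal{A}$ with $\mu(F)<\infty$, $\varepsilon>0$ and bounded strongly measurable $u_1\colon F\to X$ there is measurable $F_\varepsilon\subset F$ with $\mu(F\setminus F_\varepsilon)<\varepsilon$ and $u_0\chi_{\Omega\setminus F_\varepsilon}+u_1\chi_{F_\varepsilon}\in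 S$. *)

theory Defs
  imports "HOL-Analysis.Analysis"
begin

definition is_atom :: "'a measure \<Rightarrow> 'a set \<Rightarrow> bool" where
  "is_atom M A \<longleftrightarrow> A \<in> sets M \<and> emeasure M A > 0 \<and>
     (\<forall>B\<in>sets M. B \<subseteq> A \<longrightarrow> emeasure M B = 0 \<or> emeasure M (A - B) = 0)"

definition sigma_finite_set :: "'a measure \<Rightarrow> 'a set \<Rightarrow> bool" where
  "sigma_finite_set M S \<longleftrightarrow>
     (\<exists>An::nat \<Rightarrow> 'a set. (\<forall>n. An n \<in> sets M \<and> emeasure M (An n) < \<infinity>) \<and> S = (\<Union>n. An n))"

definition atoms_sigma_set :: "'a measure \<Rightarrow> 'a set \<Rightarrow> bool" where
  "atoms_sigma_set M A \<longleftrightarrow>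
     (\<exists>C S. countable C \<and> (\<forall>B\<in>C. is_atom M B) \<and> sigma_finite_set M S \<and> A = \<Union>C \<union> S)"

definition separable_set :: "'b::metric_space set \<Rightarrow> bool" where
  "separable_set W \<longleftrightarrow> (\<exists>D. countable D \<and> D \<subseteq> W \<and> W \<subseteq> closure D)"

definition strongly_measurable :: "'a measure \<Rightarrow> ('a \<Rightarrow> 'b::real_normed_vector) \<Rightarrow> bool" where
  "strongly_measurable M u \<longleftrightarrow>
     (\<exists>s::nat \<Rightarrow> 'a \<Rightarrow> 'b. (\<forall>n. simple_function M (s n)) \<and>
        (\<forall>\<omega>\<in>space M. (\<lambda>n. s n \<omega>) \<longlonglongrightarrow> u \<omega>))"

definition orlicz_integrand :: "'a measure \<Rightarrow> ('a \<Rightarrow> 'b::banach \<Rightarrow> ennreal) \<Rightarrow> bool" where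
  "orlicz_integrand M \<phi> \<longleftrightarrow>
     (AE \<omega> in M.
        (\<forall>x. \<phi> \<omega> (- x) = \<phi> \<omega> x) \<and>
        (\<forall>x y t. 0 \<le> t \<and> t \<le> 1 \<longrightarrow>
            \<phi> \<omega> (t *\<^sub>R x + (1 - t) *\<^sub>R y) \<le> ennreal t * \<phi> \<omega> x + ennreal (1 - t) * \<phi> \<omega> y) \<and>
        (\<forall>c. closed {x. \<phi> \<omega> x \<le> c}) \<and>
        (\<exists>x. \<phi> \<omega> x < \<infinity>) \<and>
        (\<phi> \<omega> \<longlongrightarrow> 0) (at 0) \<and>
        (\<phi> \<omega> \<longlongrightarrow> \<infinity>) at_infinity) \<and>
     (\<forall>A W. atoms_sigma_set M A \<and> separable_set W \<longrightarrow>
        (\<lambda>(\<omega>, x). \<phi> \<omega> x) \<in> borel_measurable (restrict_space M A \<Otimes>\<^sub>M restrict_space borel W))"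

definition real_valued_integrand :: "'a measure \<Rightarrow> ('a \<Rightarrow> 'b \<Rightarrow> ennreal) \<Rightarrow> bool" where
  "real_valued_integrand M \<phi> \<longleftrightarrow> (AE \<omega> in M. \<forall>x. \<phi> \<omega> x < \<infinity>)"

definition lux_set :: "'a measure \<Rightarrow> ('a \<Rightarrow> 'b::real_normed_vector \<Rightarrow> ennreal) \<Rightarrow> ('a \<Rightarrow> 'b) \<Rightarrow> real set" where
  "lux_set M \<phi> u = {\<alpha>. \<alpha> > 0 \<and> (\<integral>\<^sup>+ \<omega>. \<phi> \<omega> ((1 / \<alpha>) *\<^sub>R u \<omega>) \<partial>M) \<le> 1}"

text \<open>Luxemburg norm (meaningful when the set is nonempty).\<close>
definition lux_norm :: "'a measure \<Rightarrow> ('a \<Rightarrow> 'b::real_normed_vector \<Rightarrow> ennreal) \<Rightarrow> ('a \<Rightarrow> 'b) \<Rightarrow> real" where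
  "lux_norm M \<phi> u = Inf (lux_set M \<phi> u)"

definition L_phi :: "'a measure \<Rightarrow> ('a \<Rightarrow> 'b::real_normed_vector \<Rightarrow> ennreal) \<Rightarrow> ('a \<Rightarrow> 'b) set" where
  "L_phi M \<phi> = {u. strongly_measurable M u \<and> lux_set M \<phi> u \<noteq> {}}"

definition C_phi :: "'a measure \<Rightarrow> ('a \<Rightarrow> 'b::real_normed_vector \<Rightarrow> ennreal) \<Rightarrow> ('a \<Rightarrow> 'b) set" where
  "C_phi M \<phi> = {u \<in> L_phi M \<phi>.
     \<forall>E::nat \<Rightarrow> 'a set. (\<forall>n. E n \<in> sets M) \<and>
        (AE \<omega> in M. (\<lambda>n. indicator (E n) \<omega> :: real) \<longlonglongrightarrow> 0) \<longrightarrow>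
        (\<lambda>n. lux_norm M \<phi> (\<lambda>\<omega>. indicator (E n) \<omega> *\<^sub>R u \<omega>)) \<longlonglongrightarrow> 0}"

definition C_sigma_phi :: "'a measure \<Rightarrow> ('a \<Rightarrow> 'b::real_normed_vector \<Rightarrow> ennreal) \<Rightarrow> ('a \<Rightarrow> 'b) set" where
  "C_sigma_phi M \<phi> = {u \<in> C_phi M \<phi>.
     \<exists>S. sigma_finite_set M S \<and> (AE \<omega> in M. \<omega> \<notin> S \<longrightarrow> u \<omega> = 0)}"

definition almost_decomposable :: "'a measure \<Rightarrow> ('a \<Rightarrow> 'b::real_normed_vector) set \<Rightarrow> bool" where
  "almost_decomposable M S \<longleftrightarrow>
     (\<forall>u0\<in>S. \<forall>F\<in>sets M. emeasure M F < \<infinity> \<longrightarrow> (\<forall>\<epsilon>::real. \<epsilon> > 0 \<longrightarrow>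
        (\<forall>u1. strongly_measurable (restrict_space M F) u1 \<and> bounded (u1 ` F) \<longrightarrow>
          (\<exists>F\<epsilon>. F\<epsilon> \<in> sets M \<and> F\<epsilon> \<subseteq> F \<and> emeasure M (F - F\<epsilon>) < ennreal \<epsilon> \<and>
                (\<lambda>\<omega>. if \<omega> \<in> F\<epsilon> then u1 \<omega> else u0 \<omega>) \<in> S))))"

end

theory Submission
  imports Defs
begin


lemma nn_cmult_le:
  fixes c :: ennreal
  assumes "c \<noteq> top"
  shows "(\<integral>\<^sup>+x. c * f x \<partial>M) \<le> c * integral\<^sup>N M f"
proof (cases "c = 0")
  case True then show ?thesis by simp
next
  case False
  show ?thesis
    unfolding nn_integral_def[of M "\<lambda>x. c * f x"]
  proof (rule SUP_least, clarify)
    fix g assume g: "simple_function M g" "g \<le> (\<lambda>x. c * f x)"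
    define h where "h = (\<lambda>x. g x / c)"
    have hs: "simple_function M h" unfolding h_def using g(1) by (rule simple_function_compose1)
    have hf: "h x \<le> f x" for x
      unfolding h_def using g(2) False by (intro divide_le_posI_ennreal) (auto simp: le_fun_def zero_less_iff_neq_zero)
    have gh: "g x = c * h x" for x
      unfolding h_def using False assms by (simp add: ennreal_times_divide mult.commute[of c] ennreal_mult_divide_eq)
    have "integral\<^sup>S M g = integral\<^sup>S M (\<lambda>x. c * h x)" by (simp add: gh[abs_def])
    also have "\<dots> = c * integral\<^sup>S M h" using hs by simp
    also have "\<dots> = c * integral\<^sup>N M h" using hs by (simp add: nn_integral_eq_simple_integral)
    also have "\<dots> \<le> c * integral\<^sup>N M f" by (intro mult_left_mono nn_integral_mono hf) auto
    finally show "integral\<^sup>S M g \<le> c * integral\<^sup>N M f" .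
  qed
qed

lemma nn_add_le:
  assumes h: "h \<in> borel_measurable M"
  shows "(\<integral>\<^sup>+x. h x + f x \<partial>M) \<le> integral\<^sup>N M h + integral\<^sup>N M f"
  unfolding nn_integral_def[of M "\<lambda>x. h x + f x"]
proof (rule SUP_least, clarify)
  fix g assume g: "simple_function M g" "g \<le> (\<lambda>x. h x + f x)"
  have gm: "g \<in> borel_measurable M" using g(1) by (rule borel_measurable_simple_function)
  have eq: "g x = min (g x) (h x) + (if h x = top then 0 else g x - h x)" for x
    by (cases "g x = top"; cases "g x \<le> h x") (auto simp: min_def add_diff_inverse_ennreal diff_eq_0_iff_ennreal less_top)
  have le: "(if h x = top then 0 else g x - h x) \<le> f x" for x
    using g(2) by (auto simp: le_fun_def ennreal_minus_le_iff)
  have "integral\<^sup>S M g = integral\<^sup>N M g" using g(1) by (simp add: nn_integral_eq_simple_integral)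
  also have "\<dots> = (\<integral>\<^sup>+x. min (g x) (h x) + (if h x = top then 0 else g x - h x) \<partial>M)" using eq by (intro nn_integral_cong) metis
  also have "\<dots> = (\<integral>\<^sup>+x. min (g x) (h x) \<partial>M) + (\<integral>\<^sup>+x. (if h x = top then 0 else g x - h x) \<partial>M)"
    using gm h by (intro nn_integral_add) auto
  also have "\<dots> \<le> integral\<^sup>N M h + integral\<^sup>N M f"
    by (intro add_mono nn_integral_mono le) auto
  finally show "integral\<^sup>S M g \<le> integral\<^sup>N M h + integral\<^sup>N M f" .
qed



lemma phi_zero:
  fixes p :: "'b::real_normed_vector \<Rightarrow> ennreal" and v :: 'b
  assumes v: "v \<noteq> 0" and cl: "\<forall>c. closed {x. p x \<le> c}" and lim: "(p \<longlongrightarrow> 0) (at 0)"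
  shows "p 0 = 0"
proof -
  define xs where "xs = (\<lambda>n::nat. (1 / real (Suc n)) *\<^sub>R v)"
  have "xs \<longlonglongrightarrow> 0"
  proof -
    have "(\<lambda>n. 1 / real (Suc n)) \<longlonglongrightarrow> 0" by (rule LIMSEQ_Suc[OF lim_inverse_n'])
    from tendsto_scaleR[OF this tendsto_const[of v]] show ?thesis unfolding xs_def by simp
  qed
  moreover have "\<forall>n. xs n \<noteq> 0" using v by (auto simp: xs_def)
  ultimately have "filterlim xs (at 0) sequentially"
    by (auto simp: filterlim_at)
  then have px: "(\<lambda>n. p (xs n)) \<longlonglongrightarrow> 0" by (rule filterlim_compose[OF lim])
  have "p 0 \<le> c" if c: "c > 0" for c
  proof -
    have "eventually (\<lambda>n. p (xs n) < c) sequentially" using px c by (rule order_tendstoD)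
    then have "eventually (\<lambda>n. xs n \<in> {x. p x \<le> c}) sequentially" by (auto elim: eventually_mono)
    from Lim_in_closed_set[OF cl[rule_format] this _ \<open>xs \<longlonglongrightarrow> 0\<close>] show ?thesis by simp
  qed
  show ?thesis
  proof (rule ccontr)
    assume "p 0 \<noteq> 0"
    then have "0 < p 0" by (simp add: zero_less_iff_neq_zero)
    then obtain c where "0 < c" "c < p 0" using dense by blast
    with \<open>\<And>c. c > 0 \<Longrightarrow> p 0 \<le> c\<close> show False by (meson not_le)
  qed
qed

lemma phi_scale:
  fixes p :: "'b::real_normed_vector \<Rightarrow> ennreal"
  assumes conv: "\<forall>x y t. 0 \<le> t \<and> t \<le> 1 \<longrightarrow> p (t *\<^sub>R x + (1 - t) *\<^sub>R y) \<le> ennreal t * p x + ennreal (1 - t) * p y"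
    and z: "p 0 = 0" and t: "0 \<le> t" "t \<le> 1"
  shows "p (t *\<^sub>R x) \<le> ennreal t * p x"
  using conv[rule_format, of t x 0] z t by simp

lemma phi_scale2:
  fixes p :: "'b::real_normed_vector \<Rightarrow> ennreal"
  assumes conv: "\<forall>x y t. 0 \<le> t \<and> t \<le> 1 \<longrightarrow> p (t *\<^sub>R x + (1 - t) *\<^sub>R y) \<le> ennreal t * p x + ennreal (1 - t) * p y"
    and z: "p 0 = 0" and t: "0 \<le> t" "t \<le> 1"
  shows "p (t *\<^sub>R x) \<le> p x"
proof -
  have "p (t *\<^sub>R x) \<le> ennreal t * p x" by (rule phi_scale[OF conv z t])
  also have "\<dots> \<le> 1 * p x" using t by (intro mult_right_mono) auto
  finally show ?thesis by simp
qed

lemma phi_half: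
  fixes p :: "'b::real_normed_vector \<Rightarrow> ennreal"
  assumes conv: "\<forall>x y t. 0 \<le> t \<and> t \<le> 1 \<longrightarrow> p (t *\<^sub>R x + (1 - t) *\<^sub>R y) \<le> ennreal t * p x + ennreal (1 - t) * p y"
  shows "p ((1/2) *\<^sub>R (x + y)) \<le> ennreal (1/2) * p x + ennreal (1/2) * p y"
  using conv[rule_format, of "1/2" x y] by (simp add: scaleR_add_right)



lemma meas_comp:
  fixes \<phi> :: "'a \<Rightarrow> 'b::banach \<Rightarrow> ennreal"
  assumes orl: "orlicz_integrand M \<phi>" and F: "F \<in> sets M" "emeasure M F < \<infinity>"
    and s: "\<And>n. simple_function (restrict_space M F) (s n)"
    and lim: "\<And>\<omega>. \<omega> \<in> space (restrict_space M F) \<Longrightarrow> (\<lambda>n. s n \<omega>) \<longlonglongrightarrow> v \<omega>"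
  shows "(\<lambda>\<omega>. \<phi> \<omega> (v \<omega>)) \<in> borel_measurable (restrict_space M F)"
proof -
  let ?R = "restrict_space M F"
  define D where "D = (\<Union>n. s n ` space ?R)"
  have fin: "\<And>n. finite (s n ` space ?R)" using s by (simp add: simple_function_def)
  have cD: "countable D" unfolding D_def
    using fin by (simp add: countable_finite)
  define W where "W = closure D"
  have sepW: "separable_set W" unfolding separable_set_def W_def
    using cD closure_subset by blast
  have vW: "v \<omega> \<in> W" if "\<omega> \<in> space ?R" for \<omega>
    unfolding W_def closure_sequential using lim[OF that] that
    by (intro exI[of _ "\<lambda>n. s n \<omega>"]) (auto simp: D_def)
  have asF: "atoms_sigma_set M F"
    unfolding atoms_sigma_set_def sigma_finite_set_def
    using F by (intro exI[of _ "{}"] exI[of _ F]) auto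
  have joint: "(\<lambda>(\<omega>, x). \<phi> \<omega> x) \<in> borel_measurable (?R \<Otimes>\<^sub>M restrict_space borel W)"
    using orl asF sepW unfolding orlicz_integrand_def by blast
  have vm: "v \<in> borel_measurable ?R"
    using s lim proof -
    have "\<And>n. s n \<in> borel_measurable ?R" using s by (rule borel_measurable_simple_function)
    from borel_measurable_LIMSEQ_metric[OF this lim] show ?thesis .
  qed
  have vm2: "v \<in> measurable ?R (restrict_space borel W)"
    using vm vW using vm vW by (intro measurable_restrict_space2) (auto simp: Pi_iff)
  have pm: "(\<lambda>\<omega>. (\<omega>, v \<omega>)) \<in> measurable ?R (?R \<Otimes>\<^sub>M restrict_space borel W)"
    using vm2 using vm2 by (intro measurable_Pair measurable_ident_sets) auto
  have "(\<lambda>(\<omega>, x). \<phi> \<omega> x) \<circ> (\<lambda>\<omega>. (\<omega>, v \<omega>)) \<in> borel_measurable ?R"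
    using measurable_comp[OF pm joint] .
  then show ?thesis by (simp add: comp_def)
qed



definition convAE :: "'a measure \<Rightarrow> ('a \<Rightarrow> 'b::real_normed_vector \<Rightarrow> ennreal) \<Rightarrow> bool" where
  "convAE M \<phi> \<longleftrightarrow> (AE \<omega> in M. (\<forall>x y t. 0 \<le> t \<and> t \<le> 1 \<longrightarrow>
     \<phi> \<omega> (t *\<^sub>R x + (1 - t) *\<^sub>R y) \<le> ennreal t * \<phi> \<omega> x + ennreal (1 - t) * \<phi> \<omega> y) \<and> \<phi> \<omega> 0 = 0)"

lemma lux_up:
  assumes cv: "convAE M \<phi>" and a: "\<alpha> \<in> lux_set M \<phi> u" and ab: "\<alpha> \<le> \<beta>"
  shows "\<beta> \<in> lux_set M \<phi> u"
proof -
  have a0: "\<alpha> > 0" and ai: "(\<integral>\<^sup>+ \<omega>. \<phi> \<omega> ((1 / \<alpha>) *\<^sub>R u \<omega>) \<partial>M) \<le> 1"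
    using a by (auto simp: lux_set_def)
  have "AE \<omega> in M. \<phi> \<omega> ((1 / \<beta>) *\<^sub>R u \<omega>) \<le> \<phi> \<omega> ((1 / \<alpha>) *\<^sub>R u \<omega>)"
    using cv unfolding convAE_def
  proof eventually_elim
    case (elim \<omega>)
    have "\<phi> \<omega> ((\<alpha> / \<beta>) *\<^sub>R ((1 / \<alpha>) *\<^sub>R u \<omega>)) \<le> \<phi> \<omega> ((1 / \<alpha>) *\<^sub>R u \<omega>)"
      using elim a0 ab by (intro phi_scale2) auto
    then show ?case using a0 by simp
  qed
  from order_trans[OF nn_integral_mono_AE[OF this] ai]
  have "(\<integral>\<^sup>+ \<omega>. \<phi> \<omega> ((1 / \<beta>) *\<^sub>R u \<omega>) \<partial>M) \<le> 1" .
  then show ?thesis using a0 ab by (auto simp: lux_set_def)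
qed

lemma lux_norm_le: "\<alpha> \<in> lux_set M \<phi> u \<Longrightarrow> lux_norm M \<phi> u \<le> \<alpha>"
  unfolding lux_norm_def
  by (rule cInf_lower) (auto simp: lux_set_def bdd_below_def intro!: exI[of _ 0])

lemma lux_norm_nonneg: "lux_set M \<phi> u \<noteq> {} \<Longrightarrow> 0 \<le> lux_norm M \<phi> u"
  unfolding lux_norm_def
  by (rule cInf_greatest) (auto simp: lux_set_def)

lemma lux_mem:
  assumes cv: "convAE M \<phi>" and ne: "lux_set M \<phi> u \<noteq> {}" and lt: "lux_norm M \<phi> u < \<delta>"
  shows "\<delta> \<in> lux_set M \<phi> u"
proof -
  obtain \<alpha> where "\<alpha> \<in> lux_set M \<phi> u" "\<alpha> < \<delta>"
    using cInf_lessD[OF ne lt[unfolded lux_norm_def]] by blast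
  then show ?thesis using lux_up[OF cv] by auto
qed

lemma est:
  fixes \<phi> :: "'a \<Rightarrow> 'b::real_normed_vector \<Rightarrow> ennreal"
  assumes cv: "convAE M \<phi>"
    and G: "G \<in> sets M"
    and bnd: "AE \<omega> in M. \<omega> \<in> G \<longrightarrow> \<phi> \<omega> ((1/c) *\<^sub>R a \<omega>) \<le> B"
    and az: "\<And>\<omega>. \<omega> \<notin> G \<Longrightarrow> a \<omega> = 0"
    and bv: "\<And>\<omega>. b \<omega> = 0 \<or> b \<omega> = v \<omega>"
    and int: "(\<integral>\<^sup>+\<omega>. \<phi> \<omega> ((1/c) *\<^sub>R v \<omega>) \<partial>M) \<le> 1"
    and BG: "B * emeasure M G \<le> 1" and c: "c > 0" and B: "B \<noteq> top"
  shows "2*c \<in> lux_set M \<phi> (\<lambda>\<omega>. a \<omega> + b \<omega>)"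
proof -
  let ?h = "ennreal (1/2)"
  have ae: "AE \<omega> in M. \<phi> \<omega> ((1 / (2*c)) *\<^sub>R (a \<omega> + b \<omega>)) \<le>
      ?h * (B * indicator G \<omega>) + ?h * \<phi> \<omega> ((1/c) *\<^sub>R v \<omega>)"
    using cv bnd unfolding convAE_def
  proof eventually_elim
    case (elim \<omega>)
    then have conv: "\<forall>x y t. 0 \<le> t \<and> t \<le> 1 \<longrightarrow>
     \<phi> \<omega> (t *\<^sub>R x + (1 - t) *\<^sub>R y) \<le> ennreal t * \<phi> \<omega> x + ennreal (1 - t) * \<phi> \<omega> y"
      and z: "\<phi> \<omega> 0 = 0" by auto
    have e1: "(1 / (2*c)) *\<^sub>R (a \<omega> + b \<omega>) = (1/2) *\<^sub>R ((1/c) *\<^sub>R a \<omega> + (1/c) *\<^sub>R b \<omega>)"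
      by (simp add: scaleR_add_right)
    have "\<phi> \<omega> ((1 / (2*c)) *\<^sub>R (a \<omega> + b \<omega>)) \<le> ?h * \<phi> \<omega> ((1/c) *\<^sub>R a \<omega>) + ?h * \<phi> \<omega> ((1/c) *\<^sub>R b \<omega>)"
      unfolding e1 by (rule phi_half[OF conv])
    also have "\<phi> \<omega> ((1/c) *\<^sub>R a \<omega>) \<le> B * indicator G \<omega>"
      using elim az[of \<omega>] by (cases "\<omega> \<in> G") (auto simp: z)
    also have "\<phi> \<omega> ((1/c) *\<^sub>R b \<omega>) \<le> \<phi> \<omega> ((1/c) *\<^sub>R v \<omega>)"
      using bv[of \<omega>] by (auto simp: z)
    finally show ?case by (simp add: mult_left_mono add_mono)
  qed
  have "(\<integral>\<^sup>+\<omega>. \<phi> \<omega> ((1 / (2*c)) *\<^sub>R (a \<omega> + b \<omega>)) \<partial>M) \<le>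
      (\<integral>\<^sup>+\<omega>. ?h * (B * indicator G \<omega>) + ?h * \<phi> \<omega> ((1/c) *\<^sub>R v \<omega>) \<partial>M)"
    using ae by (rule nn_integral_mono_AE)
  also have "\<dots> \<le> (\<integral>\<^sup>+\<omega>. ?h * (B * indicator G \<omega>) \<partial>M) + (\<integral>\<^sup>+\<omega>. ?h * \<phi> \<omega> ((1/c) *\<^sub>R v \<omega>) \<partial>M)"
    using G by (intro nn_add_le) auto
  also have "(\<integral>\<^sup>+\<omega>. ?h * (B * indicator G \<omega>) \<partial>M) = ?h * (B * emeasure M G)"
    using G by (simp add: nn_integral_cmult_indicator mult.assoc[symmetric])
  also have "(\<integral>\<^sup>+\<omega>. ?h * \<phi> \<omega> ((1/c) *\<^sub>R v \<omega>) \<partial>M) \<le> ?h * 1"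
    using nn_cmult_le[where c="?h" and f="\<lambda>\<omega>. \<phi> \<omega> ((1/c) *\<^sub>R v \<omega>)" and M=M] int
    by (meson ennreal_neq_top mult_left_mono order_trans zero_le)
  also have "?h * (B * emeasure M G) + ?h * 1 \<le> ?h * 1 + ?h * 1"
    using BG by (intro add_mono mult_left_mono) auto
  also have "?h * 1 + ?h * 1 = 1"
    by (simp add: ennreal_plus[symmetric] del: ennreal_half ennreal_plus)
  finally show ?thesis using c by (auto simp: lux_set_def)
qed



lemma lux_ind:
  assumes cv: "convAE M \<phi>" and a: "\<alpha> \<in> lux_set M \<phi> u"
  shows "\<alpha> \<in> lux_set M \<phi> (\<lambda>\<omega>. indicator E \<omega> *\<^sub>R u \<omega>)"
proof -
  have a0: "\<alpha> > 0" and ai: "(\<integral>\<^sup>+ \<omega>. \<phi> \<omega> ((1 / \<alpha>) *\<^sub>R u \<omega>) \<partial>M) \<le> 1"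
    using a by (auto simp: lux_set_def)
  have "AE \<omega> in M. \<phi> \<omega> ((1 / \<alpha>) *\<^sub>R (indicator E \<omega> *\<^sub>R u \<omega>)) \<le> \<phi> \<omega> ((1 / \<alpha>) *\<^sub>R u \<omega>)"
    using cv unfolding convAE_def by eventually_elim (auto simp: indicator_def)
  from order_trans[OF nn_integral_mono_AE[OF this] ai] show ?thesis
    using a0 by (auto simp: lux_set_def)
qed

lemma core_sets:
  fixes \<phi> :: "'a \<Rightarrow> 'b::banach \<Rightarrow> ennreal"
  assumes orl: "orlicz_integrand M \<phi>" and rv: "real_valued_integrand M \<phi>"
    and F: "F \<in> sets M" "emeasure M F < \<infinity>" and e: "\<epsilon> > 0"
    and u1: "strongly_measurable (restrict_space M F) u1"
  obtains Fe Nf where "Fe \<in> sets M" "Fe \<subseteq> F" "emeasure M (F - Fe) < ennreal \<epsilon>"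
    "\<And>k \<omega>. \<omega> \<in> Fe \<Longrightarrow> \<phi> \<omega> (real (Suc k) *\<^sub>R u1 \<omega>) \<le> of_nat (Nf k)"
proof -
  let ?R = "restrict_space M F"
  have Fsp: "F \<subseteq> space M" using F(1) by (rule sets.sets_into_space)
  have spR: "space ?R = F" using Fsp by (auto simp: space_restrict_space)
  obtain s where s: "\<And>n. simple_function ?R (s n)"
    and lim: "\<And>\<omega>. \<omega> \<in> space ?R \<Longrightarrow> (\<lambda>n. s n \<omega>) \<longlonglongrightarrow> u1 \<omega>"
    using u1 unfolding strongly_measurable_def by blast
  define g where "g = (\<lambda>k \<omega>. \<phi> \<omega> (real (Suc k) *\<^sub>R u1 \<omega>))"
  have gm: "g k \<in> borel_measurable ?R" for k
  proof -
    have "(\<lambda>\<omega>. \<phi> \<omega> (real (Suc k) *\<^sub>R u1 \<omega>)) \<in> borel_measurable ?R"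
    proof (rule meas_comp[OF orl F(1) F(2)])
      show "simple_function ?R (\<lambda>\<omega>. real (Suc k) *\<^sub>R s n \<omega>)" for n
        using simple_function_compose1[OF s[of n], of "scaleR (real (Suc k))"] by simp
      show "(\<lambda>n. real (Suc k) *\<^sub>R s n \<omega>) \<longlonglongrightarrow> real (Suc k) *\<^sub>R u1 \<omega>" if "\<omega> \<in> space ?R" for \<omega>
        using tendsto_scaleR[OF tendsto_const lim[OF that]] .
    qed
    then show ?thesis unfolding g_def .
  qed
  define Gs where "Gs = (\<lambda>k (N::nat). {\<omega> \<in> F. g k \<omega> \<le> of_nat N})"
  have GsM: "Gs k N \<in> sets M" for k N
  proof -
    have "{\<omega> \<in> space ?R. g k \<omega> \<le> of_nat N} \<in> sets ?R"
      using gm[of k] by measurable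
    then have "Gs k N \<in> sets ?R" unfolding Gs_def spR .
    then show ?thesis using F(1) Fsp by (subst (asm) sets_restrict_space_iff) auto
  qed
  have GsF: "Gs k N \<subseteq> F" for k N by (auto simp: Gs_def)
  obtain N0 where N0: "{\<omega> \<in> space M. \<not> (\<forall>x. \<phi> \<omega> x < \<infinity>)} \<subseteq> N0" "emeasure M N0 = 0" "N0 \<in> sets M"
    using rv unfolding real_valued_integrand_def by (auto elim: AE_E)
  define eps where "eps = (\<lambda>k::nat. \<epsilon> / 2 * (1/2) ^ Suc k)"
  have eps_pos: "eps k > 0" for k using e by (simp add: eps_def)
  have "\<exists>N. emeasure M (F - Gs k N) < ennreal (eps k)" for k
  proof -
    have dec: "decseq (\<lambda>N. F - Gs k N)"
      unfolding decseq_def Gs_def by (auto intro: order_trans)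
    have rng: "range (\<lambda>N. F - Gs k N) \<subseteq> sets M" using GsM F(1) by auto
    have fin: "emeasure M (F - Gs k N) \<noteq> \<infinity>" for N
      using F(2) emeasure_mono[of "F - Gs k N" F M] F(1) by (auto simp: top_unique)
    have "(\<Inter>N. F - Gs k N) \<subseteq> N0"
    proof
      fix \<omega> assume \<omega>: "\<omega> \<in> (\<Inter>N. F - Gs k N)"
      then have "\<omega> \<in> F" by auto
      have "g k \<omega> = top"
      proof (rule ccontr)
        assume "g k \<omega> \<noteq> top"
        then obtain N where "g k \<omega> < of_nat N" using ennreal_Ex_less_of_nat by (auto simp: less_top)
        then show False using \<omega> by (auto simp: Gs_def dest: less_imp_le)
      qed
      then have "\<not> (\<forall>x. \<phi> \<omega> x < \<infinity>)" unfolding g_def by simp (metis less_irrefl)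
      then show "\<omega> \<in> N0" using N0(1) \<open>\<omega> \<in> F\<close> Fsp by blast
    qed
    then have z: "emeasure M (\<Inter>N. F - Gs k N) = 0"
      using N0 emeasure_mono[of "\<Inter>N. F - Gs k N" N0 M] by auto
    have "(\<lambda>N. emeasure M (F - Gs k N)) \<longlonglongrightarrow> 0"
      using Lim_emeasure_decseq[OF rng dec fin] z by simp
    from order_tendstoD(2)[OF this, of "ennreal (eps k)"] eps_pos[of k]
    have "eventually (\<lambda>N. emeasure M (F - Gs k N) < ennreal (eps k)) sequentially" by simp
    then show ?thesis by (meson eventually_sequentially order_refl)
  qed
  then obtain Nf where Nf: "\<And>k. emeasure M (F - Gs k (Nf k)) < ennreal (eps k)"
    by metis
  define Fe where "Fe = (\<Inter>k. Gs k (Nf k))"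
  have FeM: "Fe \<in> sets M" unfolding Fe_def using GsM
    by (intro sets.countable_INT) auto
  have FeF: "Fe \<subseteq> F" unfolding Fe_def using GsF[of 0 "Nf 0"] by blast
  have "emeasure M (F - Fe) = emeasure M (\<Union>k. F - Gs k (Nf k))"
    unfolding Fe_def by (intro arg_cong[where f="emeasure M"]) blast
  also have "\<dots> \<le> (\<Sum>k. emeasure M (F - Gs k (Nf k)))"
    using GsM F(1) by (intro emeasure_subadditive_countably) auto
  also have "\<dots> \<le> (\<Sum>k. ennreal (eps k))"
    using Nf by (intro suminf_le) (auto intro: less_imp_le)
  also have "\<dots> = ennreal (\<epsilon> / 2 * 1)"
  proof (rule suminf_ennreal_eq)
    show "0 \<le> eps k" for k using eps_pos[of k] by simp
    show "eps sums (\<epsilon> / 2 * 1)" unfolding eps_def by (intro sums_mult power_half_series)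
  qed
  also have "\<dots> < ennreal \<epsilon>" using e by (simp add: ennreal_lessI)
  finally have "emeasure M (F - Fe) < ennreal \<epsilon>" .
  moreover have "\<phi> \<omega> (real (Suc k) *\<^sub>R u1 \<omega>) \<le> of_nat (Nf k)" if "\<omega> \<in> Fe" for k \<omega>
    using that unfolding Fe_def Gs_def g_def by auto
  ultimately show ?thesis using that FeM FeF by blast
qed



lemma core_main:
  fixes \<phi> :: "'a \<Rightarrow> 'b::banach \<Rightarrow> ennreal"
  assumes orl: "orlicz_integrand M \<phi>" and rv: "real_valued_integrand M \<phi>" and cv: "convAE M \<phi>"
    and u0: "u0 \<in> L_phi M \<phi>"
    and F: "F \<in> sets M" "emeasure M F < \<infinity>" and e: "\<epsilon> > 0"
    and u1: "strongly_measurable (restrict_space M F) u1"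
  obtains Fe where "Fe \<in> sets M" "Fe \<subseteq> F" "emeasure M (F - Fe) < ennreal \<epsilon>"
    "(\<lambda>\<omega>. if \<omega> \<in> Fe then u1 \<omega> else u0 \<omega>) \<in> L_phi M \<phi>"
    "u0 \<in> C_phi M \<phi> \<Longrightarrow> (\<lambda>\<omega>. if \<omega> \<in> Fe then u1 \<omega> else u0 \<omega>) \<in> C_phi M \<phi>"
proof -
  obtain Fe Nf where FeM: "Fe \<in> sets M" and FeF: "Fe \<subseteq> F" and Fem: "emeasure M (F - Fe) < ennreal \<epsilon>"
    and Nf: "\<And>k \<omega>. \<omega> \<in> Fe \<Longrightarrow> \<phi> \<omega> (real (Suc k) *\<^sub>R u1 \<omega>) \<le> of_nat (Nf k)"
    using core_sets[OF orl rv F e u1] by blast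
  define w where "w = (\<lambda>\<omega>. if \<omega> \<in> Fe then u1 \<omega> else u0 \<omega>)"
  let ?R = "restrict_space M F"
  have Fsp: "F \<subseteq> space M" using F(1) by (rule sets.sets_into_space)
  have spR: "space ?R = F" using Fsp by (auto simp: space_restrict_space)
  have bnd: "AE \<omega> in M. \<omega> \<in> Fe \<longrightarrow> \<phi> \<omega> ((1/c) *\<^sub>R u1 \<omega>) \<le> of_nat (Nf k)"
    if c: "c > 0" "1/c \<le> real (Suc k)" for c k
    using cv unfolding convAE_def
  proof eventually_elim
    case (elim \<omega>)
    show ?case
    proof
      assume \<omega>: "\<omega> \<in> Fe"
      have t: "0 \<le> 1 / (c * real (Suc k))" "1 / (c * real (Suc k)) \<le> 1"
        using c by (auto simp: field_simps)
      have "(1/c) *\<^sub>R u1 \<omega> = (1 / (c * real (Suc k))) *\<^sub>R (real (Suc k) *\<^sub>R u1 \<omega>)"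
        by simp
      also have "\<phi> \<omega> \<dots> \<le> \<phi> \<omega> (real (Suc k) *\<^sub>R u1 \<omega>)"
        using elim t by (intro phi_scale2) auto
      also have "\<dots> \<le> of_nat (Nf k)" by (rule Nf[OF \<omega>])
      finally show "\<phi> \<omega> ((1/c) *\<^sub>R u1 \<omega>) \<le> of_nat (Nf k)" .
    qed
  qed
  have bnd1: "AE \<omega> in M. \<omega> \<in> Fe \<longrightarrow> \<phi> \<omega> ((1/c) *\<^sub>R u1 \<omega>) \<le> ennreal (1/c) * of_nat (Nf 0)"
    if c: "c \<ge> 1" for c
    using cv unfolding convAE_def
  proof eventually_elim
    case (elim \<omega>)
    show ?case
    proof
      assume \<omega>: "\<omega> \<in> Fe"
      have "\<phi> \<omega> ((1/c) *\<^sub>R u1 \<omega>) \<le> ennreal (1/c) * \<phi> \<omega> (u1 \<omega>)"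
        using elim c by (intro phi_scale) auto
      also have "\<dots> \<le> ennreal (1/c) * of_nat (Nf 0)"
        using Nf[OF \<omega>, of 0] by (intro mult_left_mono) auto
      finally show "\<phi> \<omega> ((1/c) *\<^sub>R u1 \<omega>) \<le> ennreal (1/c) * of_nat (Nf 0)" .
    qed
  qed
  obtain s where s: "\<And>n. simple_function ?R (s n)"
    and slim: "\<And>\<omega>. \<omega> \<in> space ?R \<Longrightarrow> (\<lambda>n. s n \<omega>) \<longlonglongrightarrow> u1 \<omega>"
    using u1 unfolding strongly_measurable_def by blast
  obtain t where t: "\<And>n. simple_function M (t n)"
    and tlim: "\<And>\<omega>. \<omega> \<in> space M \<Longrightarrow> (\<lambda>n. t n \<omega>) \<longlonglongrightarrow> u0 \<omega>"
    using u0 unfolding L_phi_def strongly_measurable_def by blast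
  have wsm: "strongly_measurable M w"
    unfolding strongly_measurable_def
  proof (intro exI[of _ "\<lambda>n \<omega>. if \<omega> \<in> Fe then s n \<omega> else t n \<omega>"] conjI allI ballI)
    fix n
    show "simple_function M (\<lambda>\<omega>. if \<omega> \<in> Fe then s n \<omega> else t n \<omega>)"
      unfolding simple_function_def
    proof
      have "(\<lambda>\<omega>. if \<omega> \<in> Fe then s n \<omega> else t n \<omega>) ` space M \<subseteq> s n ` space ?R \<union> t n ` space M"
        using FeF spR by auto
      moreover have "finite (s n ` space ?R)" using s[of n] by (simp add: simple_function_def)
      moreover have "finite (t n ` space M)" using t[of n] by (simp add: simple_function_def)
      ultimately show "finite ((\<lambda>\<omega>. if \<omega> \<in> Fe then s n \<omega> else t n \<omega>) ` space M)"
        by (meson finite_UnI finite_subset)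
      show "\<forall>x\<in>(\<lambda>\<omega>. if \<omega> \<in> Fe then s n \<omega> else t n \<omega>) ` space M.
          (\<lambda>\<omega>. if \<omega> \<in> Fe then s n \<omega> else t n \<omega>) -` {x} \<inter> space M \<in> sets M"
      proof
        fix x
        have s1: "s n -` {x} \<inter> space ?R \<in> sets ?R" using s[of n] by (rule simple_functionD(2))
        then have s2: "s n -` {x} \<inter> F \<in> sets M"
          using F(1) Fsp spR by (subst (asm) sets_restrict_space_iff) auto
        have t2: "t n -` {x} \<inter> space M \<in> sets M" using t[of n] by (rule simple_functionD(2))
        have "(\<lambda>\<omega>. if \<omega> \<in> Fe then s n \<omega> else t n \<omega>) -` {x} \<inter> space M =
            (Fe \<inter> (s n -` {x} \<inter> F)) \<union> ((space M - Fe) \<inter> (t n -` {x} \<inter> space M))"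
          using FeF Fsp by (auto split: if_splits)
        also have "\<dots> \<in> sets M" using s2 t2 FeM by auto
        finally show "(\<lambda>\<omega>. if \<omega> \<in> Fe then s n \<omega> else t n \<omega>) -` {x} \<inter> space M \<in> sets M" .
      qed
    qed
  next
    fix \<omega> assume \<omega>: "\<omega> \<in> space M"
    show "(\<lambda>n. if \<omega> \<in> Fe then s n \<omega> else t n \<omega>) \<longlonglongrightarrow> w \<omega>"
    proof (cases "\<omega> \<in> Fe")
      case True
      then have "\<omega> \<in> space ?R" using FeF spR by auto
      then show ?thesis using slim True by (simp add: w_def)
    next
      case False
      then show ?thesis using tlim[OF \<omega>] by (simp add: w_def)
    qed
  qed
  obtain \<alpha>0 where a0: "\<alpha>0 \<in> lux_set M \<phi> u0" using u0 unfolding L_phi_def by blast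
  have decomp: "\<And>E. (\<lambda>\<omega>. indicator E \<omega> *\<^sub>R w \<omega>) =
      (\<lambda>\<omega>. indicator (E \<inter> Fe) \<omega> *\<^sub>R u1 \<omega> + indicator (E - Fe) \<omega> *\<^sub>R u0 \<omega>)"
    by (auto simp: w_def indicator_def)
  have wL: "w \<in> L_phi M \<phi>"
  proof -
    define m where "m = measure M F"
    have mF: "emeasure M F = ennreal m" using F(2) by (simp add: m_def emeasure_eq_ennreal_measure less_top)
    have m0: "m \<ge> 0" by (simp add: m_def)
    define c where "c = max (max \<alpha>0 1) (real (Nf 0) * m)"
    have c1: "c \<ge> 1" and ca: "c \<ge> \<alpha>0" and cm: "real (Nf 0) * m \<le> c" by (auto simp: c_def)
    have cL: "c \<in> lux_set M \<phi> (\<lambda>\<omega>. indicator UNIV \<omega> *\<^sub>R u0 \<omega>)"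
      using lux_up[OF cv a0 ca] by simp
    have "2 * c \<in> lux_set M \<phi> (\<lambda>\<omega>. indicator (UNIV \<inter> Fe) \<omega> *\<^sub>R u1 \<omega> + indicator (UNIV - Fe) \<omega> *\<^sub>R u0 \<omega>)"
    proof (rule est[OF cv FeM])
      show "AE \<omega> in M. \<omega> \<in> Fe \<longrightarrow> \<phi> \<omega> ((1/c) *\<^sub>R (indicator (UNIV \<inter> Fe) \<omega> *\<^sub>R u1 \<omega>)) \<le> ennreal (1/c) * of_nat (Nf 0)"
        using bnd1[OF c1] by eventually_elim auto
      show "indicator (UNIV \<inter> Fe) \<omega> *\<^sub>R u1 \<omega> = 0" if "\<omega> \<notin> Fe" for \<omega> using that by simp
      show "indicator (UNIV - Fe) \<omega> *\<^sub>R u0 \<omega> = 0 \<or> indicator (UNIV - Fe) \<omega> *\<^sub>R u0 \<omega> = indicator UNIV \<omega> *\<^sub>R u0 \<omega>" for \<omega>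
        by (auto simp: indicator_def)
      show "(\<integral>\<^sup>+\<omega>. \<phi> \<omega> ((1/c) *\<^sub>R (indicator UNIV \<omega> *\<^sub>R u0 \<omega>)) \<partial>M) \<le> 1"
        using cL by (simp add: lux_set_def)
      have "ennreal (1/c) * of_nat (Nf 0) * emeasure M Fe \<le> ennreal (1/c) * of_nat (Nf 0) * emeasure M F"
        using FeF F(1) by (intro mult_left_mono emeasure_mono) auto
      also have "\<dots> = ennreal (1/c * real (Nf 0) * m)"
        using c1 m0 by (simp add: mF ennreal_of_nat_eq_real_of_nat flip: ennreal_mult)
      also have "\<dots> \<le> ennreal 1"
        using c1 cm by (intro ennreal_leI) (auto simp: field_simps)
      finally show "ennreal (1/c) * of_nat (Nf 0) * emeasure M Fe \<le> 1" by simp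
      show "c > 0" using c1 by simp
      show "ennreal (1/c) * of_nat (Nf 0) \<noteq> top" by (simp add: ennreal_of_nat_eq_real_of_nat ennreal_mult_eq_top_iff)
    qed
    then have "lux_set M \<phi> w \<noteq> {}" using decomp[of UNIV] by auto
    then show ?thesis using wsm by (simp add: L_phi_def)
  qed
  have wC: "w \<in> C_phi M \<phi>" if u0C: "u0 \<in> C_phi M \<phi>"
  proof -
    have "(\<lambda>n. lux_norm M \<phi> (\<lambda>\<omega>. indicator (E n) \<omega> *\<^sub>R w \<omega>)) \<longlonglongrightarrow> 0"
      if E: "\<forall>n. E n \<in> sets M" and Eae: "AE \<omega> in M. (\<lambda>n. indicator (E n) \<omega> :: real) \<longlonglongrightarrow> 0" for E
    proof -
      let ?L = "\<lambda>n. lux_norm M \<phi> (\<lambda>\<omega>. indicator (E n) \<omega> *\<^sub>R w \<omega>)"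
      have u0lim: "(\<lambda>n. lux_norm M \<phi> (\<lambda>\<omega>. indicator (E n) \<omega> *\<^sub>R u0 \<omega>)) \<longlonglongrightarrow> 0"
        using u0C E Eae unfolding C_phi_def by blast
      have mlim: "(\<lambda>n. emeasure M (E n \<inter> F)) \<longlonglongrightarrow> 0"
      proof -
        have "(\<lambda>i. \<integral>\<^sup>+\<omega>. indicator (E i \<inter> F) \<omega> \<partial>M) \<longlonglongrightarrow> (\<integral>\<^sup>+\<omega>. 0 \<partial>M)"
        proof (rule nn_integral_dominated_convergence[where w="indicator F"])
          show "(\<lambda>\<omega>. indicator (E i \<inter> F) \<omega> :: ennreal) \<in> borel_measurable M" for i
            using E F(1) by auto
          show "(\<lambda>\<omega>. 0 :: ennreal) \<in> borel_measurable M" by simp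
          show "(indicator F :: 'a \<Rightarrow> ennreal) \<in> borel_measurable M" using F(1) by auto
          show "AE \<omega> in M. (indicator (E j \<inter> F) \<omega> :: ennreal) \<le> indicator F \<omega>" for j
            by (auto simp: indicator_def)
          show "(\<integral>\<^sup>+\<omega>. indicator F \<omega> \<partial>M) < \<infinity>" using F by simp
          show "AE \<omega> in M. (\<lambda>i. indicator (E i \<inter> F) \<omega> :: ennreal) \<longlonglongrightarrow> 0"
            using Eae
          proof eventually_elim
            case (elim \<omega>)
            have "eventually (\<lambda>i. (indicator (E i) \<omega> :: real) < 1) sequentially"
              using order_tendstoD(2)[OF elim, of 1] by simp
            then have "eventually (\<lambda>i. (indicator (E i \<inter> F) \<omega> :: ennreal) = 0) sequentially"
              by (rule eventually_mono) (auto simp: indicator_def split: if_splits)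
            then show ?case by (rule tendsto_eventually)
          qed
        qed
        then show ?thesis using E F(1) by simp
      qed
      have key: "eventually (\<lambda>n. 0 \<le> ?L n \<and> ?L n \<le> \<delta>) sequentially" if d: "\<delta> > 0" for \<delta>
      proof -
        define c where "c = \<delta> / 2"
        have c0: "c > 0" using d by (simp add: c_def)
        obtain k where k: "1/c \<le> real (Suc k)"
          using real_arch_simple[of "1/c"] by (metis of_nat_Suc le_add_same_cancel1 order_trans zero_le_one add.commute)
        have ev1: "eventually (\<lambda>n. lux_norm M \<phi> (\<lambda>\<omega>. indicator (E n) \<omega> *\<^sub>R u0 \<omega>) < c) sequentially"
          using order_tendstoD(2)[OF u0lim c0] .
        have "(\<lambda>n. of_nat (Nf k) * emeasure M (E n \<inter> F)) \<longlonglongrightarrow> of_nat (Nf k) * 0"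
          by (intro ennreal_tendsto_cmult mlim) (simp add: of_nat_less_top)
        then have ev2: "eventually (\<lambda>n. of_nat (Nf k) * emeasure M (E n \<inter> F) < 1) sequentially"
          using order_tendstoD(2)[of _ "0::ennreal" _ 1] by simp
        from ev1 ev2 show ?thesis
        proof eventually_elim
          case (elim n)
          have ne: "lux_set M \<phi> (\<lambda>\<omega>. indicator (E n) \<omega> *\<^sub>R u0 \<omega>) \<noteq> {}"
            using lux_ind[OF cv a0] by blast
          have cL: "c \<in> lux_set M \<phi> (\<lambda>\<omega>. indicator (E n) \<omega> *\<^sub>R u0 \<omega>)"
            using lux_mem[OF cv ne elim(1)] .
          have GM: "E n \<inter> Fe \<in> sets M" using E FeM by auto
          have "2 * c \<in> lux_set M \<phi> (\<lambda>\<omega>. indicator (E n \<inter> Fe) \<omega> *\<^sub>R u1 \<omega> + indicator (E n - Fe) \<omega> *\<^sub>R u0 \<omega>)"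
          proof (rule est[OF cv GM])
            show "AE \<omega> in M. \<omega> \<in> E n \<inter> Fe \<longrightarrow> \<phi> \<omega> ((1/c) *\<^sub>R (indicator (E n \<inter> Fe) \<omega> *\<^sub>R u1 \<omega>)) \<le> of_nat (Nf k)"
              using bnd[OF c0 k] by eventually_elim auto
            show "indicator (E n \<inter> Fe) \<omega> *\<^sub>R u1 \<omega> = 0" if "\<omega> \<notin> E n \<inter> Fe" for \<omega> using that by simp
            show "indicator (E n - Fe) \<omega> *\<^sub>R u0 \<omega> = 0 \<or> indicator (E n - Fe) \<omega> *\<^sub>R u0 \<omega> = indicator (E n) \<omega> *\<^sub>R u0 \<omega>" for \<omega>
              by (auto simp: indicator_def)
            show "(\<integral>\<^sup>+\<omega>. \<phi> \<omega> ((1/c) *\<^sub>R (indicator (E n) \<omega> *\<^sub>R u0 \<omega>)) \<partial>M) \<le> 1"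
              using cL by (simp add: lux_set_def)
            have "of_nat (Nf k) * emeasure M (E n \<inter> Fe) \<le> of_nat (Nf k) * emeasure M (E n \<inter> F)"
              using FeF F(1) E by (intro mult_left_mono emeasure_mono) auto
            also have "\<dots> \<le> 1" using elim(2) by simp
            finally show "of_nat (Nf k) * emeasure M (E n \<inter> Fe) \<le> 1" .
            show "c > 0" by (rule c0)
            show "(of_nat (Nf k) :: ennreal) \<noteq> top" by (simp add: of_nat_less_top less_top[symmetric])
          qed
          then have L2: "2 * c \<in> lux_set M \<phi> (\<lambda>\<omega>. indicator (E n) \<omega> *\<^sub>R w \<omega>)"
            unfolding decomp .
          have "?L n \<le> 2 * c" using lux_norm_le[OF L2] .
          moreover have "0 \<le> ?L n" using lux_norm_nonneg[of M \<phi>] L2 by blast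
          ultimately show ?case by (simp add: c_def)
        qed
      qed
      show ?thesis
      proof (rule order_tendstoI)
        fix a :: real assume "a < 0"
        from key[of 1] show "eventually (\<lambda>n. a < ?L n) sequentially"
          by (rule eventually_mono) (use \<open>a < 0\<close> in auto)
      next
        fix a :: real assume "0 < a"
        from key[of "a/2"] \<open>0 < a\<close> show "eventually (\<lambda>n. ?L n < a) sequentially"
          by (auto elim: eventually_mono)
      qed
    qed
    then show ?thesis using wL unfolding C_phi_def by blast
  qed
  show ?thesis
    using that[OF FeM FeF Fem] wL wC unfolding w_def by blast
qed


lemma main_step:
  fixes M :: "'a measure" and \<phi> :: "'a \<Rightarrow> 'b::banach \<Rightarrow> ennreal"
  assumes orl: "orlicz_integrand M \<phi>" and rv: "real_valued_integrand M \<phi>"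
    and u0: "u0 \<in> L_phi M \<phi>"
    and F: "F \<in> sets M" "emeasure M F < \<infinity>" and e: "\<epsilon> > 0"
    and u1: "strongly_measurable (restrict_space M F) u1"
  shows "\<exists>Fe. Fe \<in> sets M \<and> Fe \<subseteq> F \<and> emeasure M (F - Fe) < ennreal \<epsilon> \<and>
    (\<lambda>\<omega>. if \<omega> \<in> Fe then u1 \<omega> else u0 \<omega>) \<in> L_phi M \<phi> \<and>
    (u0 \<in> C_phi M \<phi> \<longrightarrow> (\<lambda>\<omega>. if \<omega> \<in> Fe then u1 \<omega> else u0 \<omega>) \<in> C_phi M \<phi>)"
proof (cases "\<exists>v::'b. v \<noteq> 0")
  case True
  then obtain v :: 'b where v: "v \<noteq> 0" by blast
  have cv: "convAE M \<phi>"
    using orl unfolding orlicz_integrand_def convAE_def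
    by (elim conjE eventually_mono) (use phi_zero[OF v] in blast)
  obtain Fe where "Fe \<in> sets M" "Fe \<subseteq> F" "emeasure M (F - Fe) < ennreal \<epsilon>"
    "(\<lambda>\<omega>. if \<omega> \<in> Fe then u1 \<omega> else u0 \<omega>) \<in> L_phi M \<phi>"
    "u0 \<in> C_phi M \<phi> \<Longrightarrow> (\<lambda>\<omega>. if \<omega> \<in> Fe then u1 \<omega> else u0 \<omega>) \<in> C_phi M \<phi>"
    using core_main[OF orl rv cv u0 F e u1] by blast
  then show ?thesis by blast
next
  case False
  then have z: "\<And>x::'b. x = 0" by blast
  have w: "(\<lambda>\<omega>. if \<omega> \<in> F then u1 \<omega> else u0 \<omega>) = u0"
    using z[of "u0 _"] z[of "u1 _"] by (intro ext) metis
  show ?thesis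
    using F u0 e by (intro exI[of _ F]) (auto simp: w)
qed

theorem lemma3p4p7:
  fixes M :: "'a measure" and \<phi> :: "'a \<Rightarrow> 'b::banach \<Rightarrow> ennreal"
  assumes "\<exists>A\<in>sets M. emeasure M A > 0"
    and "orlicz_integrand M \<phi>"
    and "real_valued_integrand M \<phi>"
  shows "almost_decomposable M (C_phi M \<phi>) \<and> almost_decomposable M (C_sigma_phi M \<phi>)"
proof
  show "almost_decomposable M (C_phi M \<phi>)"
    unfolding almost_decomposable_def
  proof (intro ballI impI allI, elim conjE)
    fix u0 F \<epsilon> and u1 :: "'a \<Rightarrow> 'b"
    assume u0: "u0 \<in> C_phi M \<phi>" and F: "F \<in> sets M" "emeasure M F < \<infinity>" and e: "(0::real) < \<epsilon>"
      and u1: "strongly_measurable (restrict_space M F) u1"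
    have u0L: "u0 \<in> L_phi M \<phi>" using u0 by (simp add: C_phi_def)
    have ms: "\<exists>Fe. Fe \<in> sets M \<and> Fe \<subseteq> F \<and> emeasure M (F - Fe) < ennreal \<epsilon> \<and>
    (\<lambda>\<omega>. if \<omega> \<in> Fe then u1 \<omega> else u0 \<omega>) \<in> L_phi M \<phi> \<and>
    (u0 \<in> C_phi M \<phi> \<longrightarrow> (\<lambda>\<omega>. if \<omega> \<in> Fe then u1 \<omega> else u0 \<omega>) \<in> C_phi M \<phi>)"
      by (rule main_step) (use assms u0L F e u1 in auto)
    from ms u0
    show "\<exists>F\<epsilon>. F\<epsilon> \<in> sets M \<and> F\<epsilon> \<subseteq> F \<and> emeasure M (F - F\<epsilon>) < ennreal \<epsilon> \<and>
        (\<lambda>\<omega>. if \<omega> \<in> F\<epsilon> then u1 \<omega> else u0 \<omega>) \<in> C_phi M \<phi>" by blast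
  qed
  show "almost_decomposable M (C_sigma_phi M \<phi>)"
    unfolding almost_decomposable_def
  proof (intro ballI impI allI, elim conjE)
    fix u0 F \<epsilon> and u1 :: "'a \<Rightarrow> 'b"
    assume u0: "u0 \<in> C_sigma_phi M \<phi>" and F: "F \<in> sets M" "emeasure M F < \<infinity>" and e: "(0::real) < \<epsilon>"
      and u1: "strongly_measurable (restrict_space M F) u1"
    have u0C: "u0 \<in> C_phi M \<phi>" using u0 by (simp add: C_sigma_phi_def)
    obtain S where S: "sigma_finite_set M S" and Sae: "AE \<omega> in M. \<omega> \<notin> S \<longrightarrow> u0 \<omega> = 0"
      using u0 by (auto simp: C_sigma_phi_def)
    have u0L: "u0 \<in> L_phi M \<phi>" using u0C by (simp add: C_phi_def)
    have ms: "\<exists>Fe. Fe \<in> sets M \<and> Fe \<subseteq> F \<and> emeasure M (F - Fe) < ennreal \<epsilon> \<and>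
    (\<lambda>\<omega>. if \<omega> \<in> Fe then u1 \<omega> else u0 \<omega>) \<in> L_phi M \<phi> \<and>
    (u0 \<in> C_phi M \<phi> \<longrightarrow> (\<lambda>\<omega>. if \<omega> \<in> Fe then u1 \<omega> else u0 \<omega>) \<in> C_phi M \<phi>)"
      by (rule main_step) (use assms u0L F e u1 in auto)
    obtain Fe where Fe: "Fe \<in> sets M" "Fe \<subseteq> F" "emeasure M (F - Fe) < ennreal \<epsilon>"
      and wC: "(\<lambda>\<omega>. if \<omega> \<in> Fe then u1 \<omega> else u0 \<omega>) \<in> C_phi M \<phi>"
      using ms u0C by blast
    have "\<exists>An::nat \<Rightarrow> 'a set. (\<forall>n. An n \<in> sets M \<and> emeasure M (An n) < \<infinity>) \<and> S = (\<Union>n. An n)"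
      using S unfolding sigma_finite_set_def .
    then obtain An :: "nat \<Rightarrow> 'a set" where An0: "(\<forall>n. An n \<in> sets M \<and> emeasure M (An n) < \<infinity>) \<and> S = (\<Union>n. An n)"
      by (rule exE)
    have An: "\<And>n. An n \<in> sets M" "\<And>n. emeasure M (An n) < \<infinity>" "S = (\<Union>n. An n)"
      using An0 by auto
    have SF: "sigma_finite_set M (S \<union> F)"
      unfolding sigma_finite_set_def
    proof (intro exI[of _ "\<lambda>n. An n \<union> F"] conjI allI)
      fix n
      show "An n \<union> F \<in> sets M" using An(1) F(1) by auto
      have "emeasure M (An n \<union> F) \<le> emeasure M (An n) + emeasure M F"
        using An(1) F(1) by (intro emeasure_subadditive) auto
      also have "\<dots> < \<infinity>" using An(2)[of n] F(2) by (simp add: less_top)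
      finally show "emeasure M (An n \<union> F) < \<infinity>" .
    next
      show "S \<union> F = (\<Union>n. An n \<union> F)" using An(3) by auto
    qed
    have "AE \<omega> in M. \<omega> \<notin> S \<union> F \<longrightarrow> (if \<omega> \<in> Fe then u1 \<omega> else u0 \<omega>) = 0"
      using Sae by eventually_elim (use Fe(2) in auto)
    then have "(\<lambda>\<omega>. if \<omega> \<in> Fe then u1 \<omega> else u0 \<omega>) \<in> C_sigma_phi M \<phi>"
      using wC SF unfolding C_sigma_phi_def by blast
    then show "\<exists>F\<epsilon>. F\<epsilon> \<in> sets M \<and> F\<epsilon> \<subseteq> F \<and> emeasure M (F - F\<epsilon>) < ennreal \<epsilon> \<and>
        (\<lambda>\<omega>. if \<omega> \<in> F\<epsilon> then u1 \<omega> else u0 \<omega>) \<in> C_sigma_phi M \<phi>" using Fe by blast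
  qed
qed


end
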